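(* Let $(g,n)\neq(0,1),(0,2)$ with $g\ge0,n\ge1$, and write $\vec P_{g,n}(\mu_1,\ldots,\mu_n)=\sum_{a_1,\ldots,a_n\ge0}C_{g,n}(a_1,\ldots,a_n)\mu_1^{a_1}\cdots\mu_n^{a_n}$ (finite sum). Then, substituting $x_i=\frac{z_i-1}{z_i^2}$, \[ F_{g,n}=\sum_{a_1,\ldots,a_n}C_{g,n}(a_1,\ldots,a_n)\prod_{i=1}^nf_{a_i}(z_i). \] In particular $F_{g,n}$ is (the expansion of) a symmetric rational function of $z_1,\ldots,z_n$ with poles only at $z_i=2$, $i=1,\ldots,n$.
   Context: Monotone Hurwitz numbers $\vec H_{g,n}(\mu_1,\ldots,\mu_n)$: with $|\boldsymbol\mu|=\sum\mu_i$ and $m=2g-2+n+|\boldsymbol\mu|$, it is $\frac{1}{|\boldsymbol\mu|!}$ times the number of $m$-tuples of transpositions $(\sigma_1,\ldots,\sigma_m)$ in $S_{|\boldsymbol\mu|}$, with a labelling of the cycles of $\sigma_1\circ\cdots\circ\sigma_m$ by $1,\ldots,n$ so that cycle $i$ has length $\mu_i$, such that the $\sigma_j$ generate a transitive subgroup and, writing $\sigma_j=(a_j\,b_j)$ with $a_j<b_j$, $b_1\le\cdots\le b_m$. Free energy $F_{g,n}(x_1,\ldots,x_n)=\sum_{\mu_i\ge1}\vec H_{g,n}(\boldsymbol\mu)\prod x_i^{\mu_i}$. Known polynomiality (Goulden–Guay-Paquet–Novak): $\vec H_{g,n}(\boldsymbol\mu)=\prod_i\binom{2\mu_i}{\mu_i}\cdot\vec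 P_{g,n}(\boldsymbol\mu)$ where, for $(g,n)\neq(0,1),(0,2)$, $\vec P_{g,n}$ is a symmetric polynomial with rational coefficients of degree $3g-3+n$. The variables are related by $x=\frac{z-1}{z^2}$ with $z=\frac{1-\sqrt{1-4x}}{2x}$ (so $z=1$ at $x=0$). Auxiliary functions: $f_a(z)=\sum_{\mu\ge1}\binom{2\mu}{\mu}\mu^ax^\mu=\big(-\frac{z(z-1)}{z-2}\frac{\partial}{\partial z}\big)^a\frac{2-2z}{z-2}$. *)

theory Defs
  imports "HOL-Analysis.Analysis" "HOL-Combinatorics.Transposition" "HOL-Library.FuncSet"
begin

text \<open>Permutations of the ground set {0..<d} are represented as functions nat => nat
  (fixing everything outside {0..<d}). A transposition (a b) with a < b is the pair (a,b).\<close>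

definition transp_of :: "nat \<times> nat \<Rightarrow> nat \<Rightarrow> nat" where
  "transp_of t = Transposition.transpose (fst t) (snd t)"

definition transp_prod :: "(nat \<times> nat) list \<Rightarrow> nat \<Rightarrow> nat" where
  "transp_prod ts = foldr (\<circ>) (map transp_of ts) id"

text \<open>The subgroup generated by a set of transpositions (transpositions are involutions,
  so the generated monoid is the generated group).\<close>
inductive_set gen_perms :: "(nat \<Rightarrow> nat) set \<Rightarrow> (nat \<Rightarrow> nat) set" for T where
  gen_id: "id \<in> gen_perms T"
| gen_step: "t \<in> T \<Longrightarrow> p \<in> gen_perms T \<Longrightarrow> t \<circ> p \<in> gen_perms T"

definition transitive_on :: "(nat \<Rightarrow> nat) set \<Rightarrow> nat \<Rightarrow> bool" where
  "transitive_on G d \<longleftrightarrow> (\<forall>i<d. \<forall>j<d. \<exists>p\<in>G. p i = j)"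

definition monotone_tuples :: "nat \<Rightarrow> nat \<Rightarrow> (nat \<times> nat) list set" where
  "monotone_tuples d m = {ts. length ts = m \<and> (\<forall>t\<in>set ts. fst t < snd t \<and> snd t < d)
       \<and> sorted (map snd ts) \<and> transitive_on (gen_perms (transp_of ` set ts)) d}"

text \<open>Labellings of the cycles of perm by 0..<n (standing for 1..n) such that the cycle
  labelled i has length mu!i: a labelling function on points whose fibre over i is
  exactly one cycle of perm, of size mu!i.\<close>
definition cycle_labellings :: "nat list \<Rightarrow> (nat \<Rightarrow> nat) \<Rightarrow> (nat \<Rightarrow> nat) set" where
  "cycle_labellings mu perm =
     {l \<in> {0..<sum_list mu} \<rightarrow>\<^sub>E {0..<length mu}.
        \<forall>i<length mu. card {x\<in>{0..<sum_list mu}. l x = i} = mu ! i \<and>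
          (\<forall>x\<in>{0..<sum_list mu}. l x = i \<longrightarrow>
             (\<forall>y. (y \<in> {0..<sum_list mu} \<and> l y = i) \<longleftrightarrow> (\<exists>k. (perm ^^ k) x = y)))}"

definition mono_hurwitz :: "nat \<Rightarrow> nat list \<Rightarrow> real" where
  "mono_hurwitz g mu =
     (let d = sum_list mu; m = 2 * g + length mu + d - 2 in
      real (card {(ts, l). ts \<in> monotone_tuples d m \<and> l \<in> cycle_labellings mu (transp_prod ts)})
        / fact d)"

definition comps :: "nat \<Rightarrow> nat list set" where
  "comps n = {mu. length mu = n \<and> (\<forall>i<n. 1 \<le> mu ! i)}"

definition x_of_z :: "real \<Rightarrow> real" where
  "x_of_z z = (z - 1) / z ^ 2"

fun f_aux :: "nat \<Rightarrow> real \<Rightarrow> real" where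
  "f_aux 0 = (\<lambda>z. (2 - 2 * z) / (z - 2))"
| "f_aux (Suc a) = (\<lambda>z. - (z * (z - 1) / (z - 2)) * deriv (f_aux a) z)"

text \<open>Evaluation of a polynomial in n variables given by finitely supported coefficients
  Q (exponent vectors as lists of length n).\<close>
definition mpoly_eval :: "(nat list \<Rightarrow> real) \<Rightarrow> nat \<Rightarrow> (nat \<Rightarrow> real) \<Rightarrow> real" where
  "mpoly_eval Q n z = (\<Sum>e\<in>{e. length e = n \<and> Q e \<noteq> 0}. Q e * (\<Prod>i<n. z i ^ (e ! i)))"

end

theory Submission
  imports Defs "HOL-Computational_Algebra.Polynomial"
begin



definition cc :: "nat \<Rightarrow> nat \<Rightarrow> real" where
  "cc a k = (if k = 0 then 0 else real ((2*k) choose k) * real k ^ a)"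

lemma cc_nonneg: "cc a k \<ge> 0" by (simp add: cc_def)

lemma cc_Suc: "cc (Suc a) (Suc n) = real (Suc n) * cc a (Suc n)"
  by (simp add: cc_def)

lemma central_rec: "real (Suc k) * real ((2*Suc k) choose Suc k) = 2 * (2 * real k + 1) * real ((2*k) choose k)"
proof -
  have e1: "Suc k * (Suc (Suc (2*k)) choose Suc k) = Suc (Suc (2*k)) * (Suc (2*k) choose k)"
    using Suc_times_binomial[of k "Suc (2*k)"] by simp
  have e2: "Suc (2*k) * ((2*k) choose k) = (Suc (2*k) choose Suc k) * Suc k"
    using Suc_times_binomial_eq by simp
  have e3: "(Suc (2*k) choose Suc k) = (Suc (2*k) choose k)"
    using binomial_symmetric[of "Suc k" "Suc (2*k)"] by simp
  have "Suc k * ((2*Suc k) choose Suc k) = 2 * (Suc (2*k) * ((2*k) choose k))"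
    using e1 e2 e3 by (simp add: algebra_simps)
  then have "real (Suc k * ((2*Suc k) choose Suc k)) = real (2 * (Suc (2*k) * ((2*k) choose k)))"
    by presburger
  then show ?thesis by (simp add: algebra_simps)
qed

lemma gchoose_half: "((-1/2::real) gchoose k) * (-4)^k = real ((2*k) choose k)"
proof (induction k)
  case 0 then show ?case by simp
next
  case (Suc k)
  have r: "(-1/2::real) * ((-1/2) gchoose k) = of_nat k * ((-1/2) gchoose k) + of_nat (Suc k) * ((-1/2) gchoose (Suc k))"
    by (rule gbinomial_mult_1)
  have "real (Suc k) * (((-1/2::real) gchoose Suc k) * (-4)^Suc k)
      = (-4) * (real (Suc k) * ((-1/2::real) gchoose Suc k)) * (-4)^k" by (simp add: algebra_simps)
  also have "real (Suc k) * ((-1/2::real) gchoose Suc k) = (-1/2 - real k) * ((-1/2) gchoose k)"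
    using r by (simp add: algebra_simps)
  also have "(-4) * ((-1/2 - real k) * ((-1/2::real) gchoose k)) * (-4)^k = 2*(2*real k+1) * (((-1/2) gchoose k) * (-4)^k)"
    by (simp add: algebra_simps)
  also have "\<dots> = real (Suc k) * real ((2*Suc k) choose Suc k)" using Suc central_rec by simp
  finally show ?case by (metis of_nat_0_less_iff zero_less_Suc mult_left_cancel less_irrefl)
qed

lemma cc_summable: "\<bar>x\<bar> < 1/4 \<Longrightarrow> summable (\<lambda>k. cc a k * x ^ k)"
proof (induction a arbitrary: x)
  case 0
  have "norm (cc 0 k * x ^ k) \<le> (4 * \<bar>x\<bar>) ^ k" for k
  proof -
    have b: "real ((2*k) choose k) \<le> 4 ^ k"
    proof -
      have "(2*k) choose k \<le> 2^(2*k)" by (rule binomial_le_pow2)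
      also have "(2::nat)^(2*k) = 4^k" by (simp add: power_mult)
      finally show ?thesis by (metis of_nat_le_iff of_nat_numeral of_nat_power)
    qed
    have "norm (cc 0 k * x ^ k) \<le> real ((2*k) choose k) * \<bar>x\<bar> ^ k"
      by (simp add: cc_def abs_mult power_abs)
    also have "\<dots> \<le> 4^k * \<bar>x\<bar>^k" by (rule mult_right_mono[OF b]) simp
    finally show ?thesis by (simp add: power_mult_distrib)
  qed
  moreover have "summable (\<lambda>k. (4 * \<bar>x\<bar>) ^ k)"
    using 0 by (intro summable_geometric) simp
  ultimately show ?case using summable_comparison_test'[where N=0 and f="\<lambda>k. cc 0 k * x ^ k"] by simp
next
  case (Suc a)
  have "summable (\<lambda>n. diffs (cc a) n * x ^ n)"
  proof (rule termdiff_converges[where K="1/4"])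
    show "norm x < 1/4" using Suc.prems by simp
    fix y :: real assume "norm y < 1/4"
    then show "summable (\<lambda>n. cc a n * y ^ n)" using Suc.IH by simp
  qed
  then have "summable (\<lambda>n. x * (diffs (cc a) n * x ^ n))" by (rule summable_mult)
  moreover have "x * (diffs (cc a) n * x ^ n) = cc (Suc a) (Suc n) * x ^ Suc n" for n
    by (simp add: diffs_def cc_Suc)
  ultimately have "summable (\<lambda>n. cc (Suc a) (Suc n) * x ^ Suc n)" by simp
  then show ?case by (rule summable_Suc_iff[THEN iffD1])
qed

lemma cc_abs_summable: "\<bar>x\<bar> < 1/4 \<Longrightarrow> summable (\<lambda>k. norm (cc a k * x ^ k))"
proof -
  assume h: "\<bar>x\<bar> < 1/4"
  have "summable (\<lambda>k. cc a k * \<bar>x\<bar> ^ k)" by (rule cc_summable) (use h in simp)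
  moreover have "norm (cc a k * x ^ k) = cc a k * \<bar>x\<bar> ^ k" for k
    using cc_nonneg[of a k] by (simp add: abs_mult power_abs)
  ultimately show ?thesis by simp
qed

definition GG :: "nat \<Rightarrow> real \<Rightarrow> real" where
  "GG a x = (\<Sum>k. cc a k * x ^ k)"

lemma GG_deriv: "\<bar>x\<bar> < 1/4 \<Longrightarrow> (GG a has_field_derivative (\<Sum>n. diffs (cc a) n * x ^ n)) (at x)"
  unfolding GG_def[abs_def] by (rule termdiffs_strong'[where K="1/4"]) (use cc_summable in auto)

lemma GG_Suc: "\<bar>x\<bar> < 1/4 \<Longrightarrow> x * (\<Sum>n. diffs (cc a) n * x ^ n) = GG (Suc a) x"
proof -
  assume h: "\<bar>x\<bar> < 1/4"
  have s: "summable (\<lambda>n. diffs (cc a) n * x ^ n)"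
    by (rule termdiff_converges[where K="1/4"]) (use h cc_summable in auto)
  have "x * (\<Sum>n. diffs (cc a) n * x ^ n) = (\<Sum>n. x * (diffs (cc a) n * x ^ n))"
    using suminf_mult[OF s] by simp
  also have "\<dots> = (\<Sum>n. cc (Suc a) (Suc n) * x ^ Suc n)"
  proof -
    have "x * (diffs (cc a) n * x ^ n) = cc (Suc a) (Suc n) * x ^ Suc n" for n
      by (simp add: diffs_def cc_Suc)
    then show ?thesis by (simp only:)
  qed
  also have "\<dots> = GG (Suc a) x"
    unfolding GG_def using suminf_split_head[OF cc_summable[OF h, of "Suc a"]]
    by (simp add: cc_def)
  finally show ?thesis .
qed

lemma GG_0: "\<bar>x\<bar> < 1/4 \<Longrightarrow> GG 0 x = (1 - 4*x) powr (-1/2) - 1"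
proof -
  assume h: "\<bar>x\<bar> < 1/4"
  have "(\<lambda>n. ((-1/2) gchoose n) * (-4*x) ^ n) sums (1 + (-4*x)) powr (-1/2)"
    by (rule gen_binomial_real) (use h in auto)
  moreover have "((-1/2) gchoose n) * (-4*x) ^ n = real ((2*n) choose n) * x^n" for n
  proof -
    have e: "(-4*x::real)^n = (-4)^n * x^n" by (metis mult_minus_left power_mult_distrib)
    have "((-1/2) gchoose n) * (-4*x) ^ n = (((-1/2) gchoose n) * (-4) ^ n) * x^n"
      by (simp only: e mult.assoc)
    then show ?thesis using gchoose_half[of n] by (simp only:)
  qed
  ultimately have s: "(\<lambda>n. real ((2*n) choose n) * x^n) sums (1 - 4*x) powr (-1/2)" by simp
  have "(\<lambda>n. real ((2*n) choose n) * x^n - (if n = 0 then 1 else 0)) sums ((1 - 4*x) powr (-1/2) - 1)"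
    using sums_diff[OF s sums_single[of 0 "\<lambda>_. 1::real"]] by simp
  moreover have "real ((2*n) choose n) * x^n - (if n = 0 then 1 else 0) = cc 0 n * x ^ n" for n
    by (simp add: cc_def)
  ultimately show ?thesis unfolding GG_def by (simp add: sums_iff)
qed


definition II :: "real set" where "II = {2 / (1 + sqrt 2)<..<2}"

lemma II_open: "open II" unfolding II_def by simp

lemma II_pos: "z \<in> II \<Longrightarrow> 0 < z \<and> z < 2"
proof -
  assume "z \<in> II"
  then have "2 / (1 + sqrt 2) < z" "z < 2" by (auto simp: II_def)
  moreover have "0 < 2 / (1 + sqrt 2)" by (simp add: add_pos_nonneg)
  ultimately show ?thesis by linarith
qed

lemma II_x: "z \<in> II \<Longrightarrow> \<bar>x_of_z z\<bar> < 1/4"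
proof -
  assume zI: "z \<in> II"
  then have z1: "2 / (1 + sqrt 2) < z" "z < 2" by (auto simp: II_def)
  from II_pos[OF zI] have z0: "0 < z" by simp
  define s where "s = sqrt 2"
  have s2: "s^2 = 2" "s > 0" unfolding s_def by auto
  have "2 < z * (1 + s)" using z1 s2 by (simp add: divide_less_eq add_pos_nonneg s_def algebra_simps)
  then have zs: "2 * s < z + 2"
  proof -
    assume h: "2 < z * (1 + s)"
    have "2 * s * (1 + s) = 2 * s + 2 * s^2" by (simp add: algebra_simps power2_eq_square)
    also have "\<dots> = 2 * s + 4" using s2 by simp
    finally have "2 * s * (1 + s) < (z + 2) * (1 + s)" using h by (simp add: algebra_simps)
    then show ?thesis using s2 by (smt (verit) mult_right_less_imp_less)
  qed
  have "(2 * s)^2 < (z+2)^2" using zs s2 by (intro power_strict_mono) auto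
  then have q: "8 < (z+2)^2" using s2 by (simp add: power_mult_distrib)
  have up: "4 * (z - 1) < z^2"
  proof -
    have "0 < (z - 2)^2" using z1 by simp
    then show ?thesis by (simp add: power2_eq_square algebra_simps)
  qed
  have lo: "- (z^2) < 4 * (z - 1)" using q by (simp add: power2_eq_square algebra_simps)
  have zz: "0 < z^2" using z0 by simp
  have "(z - 1) / z^2 < 1/4" using up zz by (simp add: divide_less_eq)
  moreover have "-1/4 < (z - 1) / z^2" using lo zz by (simp add: less_divide_eq)
  ultimately show ?thesis unfolding x_of_z_def by linarith
qed

lemma x_of_z_deriv: "z \<noteq> 0 \<Longrightarrow> (x_of_z has_field_derivative (2 - z) / z^3) (at z)"
proof -
  assume z: "z \<noteq> 0"
  have "((\<lambda>z. (z - 1) / z^2) has_field_derivative ((1 * z^2 - (z - 1) * (2 * z)) / (z^2 * z^2))) (at z)"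
    by (rule derivative_eq_intros refl | use z in simp)+
  moreover have "(1 * z^2 - (z - 1) * (2 * z)) / (z^2 * z^2) = (2 - z) / z^3"
    using z by (simp add: field_simps power2_eq_square power3_eq_cube)
  ultimately show ?thesis unfolding x_of_z_def[abs_def] by simp
qed

lemma f_aux_GG: "z \<in> II \<Longrightarrow> f_aux a z = GG a (x_of_z z)"
proof (induction a arbitrary: z)
  case 0
  from II_pos[OF 0] have z: "0 < z" "z < 2" by auto
  have e: "1 - 4 * x_of_z z = ((2 - z) / z)^2"
    using z by (simp add: x_of_z_def field_simps power2_eq_square)
  have "(1 - 4 * x_of_z z) powr (-1/2) = inverse ((((2 - z) / z)^2) powr (1/2))"
    unfolding e using powr_minus[of "((2 - z) / z)^2" "1/2"] by simp
  also have "(((2 - z) / z)^2) powr (1/2) = (2 - z) / z"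
    using z by (simp add: powr_half_sqrt)
  finally have "(1 - 4 * x_of_z z) powr (-1/2) = z / (2 - z)" by simp
  then have "GG 0 (x_of_z z) = z / (2 - z) - 1" using GG_0[OF II_x[OF 0]] by simp
  moreover have "z / (2 - z) - 1 = (2 - 2 * z) / (z - 2)" using z by (simp add: field_simps)
  ultimately show ?case by simp
next
  case (Suc a)
  from II_pos[OF Suc.prems] have z: "0 < z" "z < 2" by auto
  define D where "D = (\<Sum>n. diffs (cc a) n * x_of_z z ^ n)"
  have "((GG a \<circ> x_of_z) has_field_derivative D * ((2 - z) / z^3)) (at z)"
    unfolding D_def
    by (rule DERIV_chain[OF GG_deriv[OF II_x[OF Suc.prems]] x_of_z_deriv]) (use z in simp)
  then have "(f_aux a has_field_derivative D * ((2 - z) / z^3)) (at z)"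
    by (rule has_field_derivative_transform_within_open[OF _ II_open Suc.prems])
       (use Suc.IH in simp)
  then have d: "deriv (f_aux a) z = D * ((2 - z) / z^3)" by (rule DERIV_imp_deriv)
  have "f_aux (Suc a) z = x_of_z z * D"
    using z by (simp add: d x_of_z_def field_simps power2_eq_square power3_eq_cube)
  also have "\<dots> = GG (Suc a) (x_of_z z)" unfolding D_def by (rule GG_Suc[OF II_x[OF Suc.prems]])
  finally show ?case .
qed




abbreviation asum :: "('a \<Rightarrow> real) \<Rightarrow> 'a set \<Rightarrow> bool" where
  "asum f A \<equiv> (\<lambda>x. norm (f x)) summable_on A"


lemma has_sum_finsum:
  fixes f :: "'i \<Rightarrow> 'a \<Rightarrow> real"
  assumes "finite I" "\<And>i. i \<in> I \<Longrightarrow> (f i has_sum s i) A"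
  shows "((\<lambda>x. \<Sum>i\<in>I. f i x) has_sum (\<Sum>i\<in>I. s i)) A"
  using assms
proof (induction I rule: finite_induct)
  case empty then show ?case by simp
next
  case (insert j I)
  have "((\<lambda>x. f j x + (\<Sum>i\<in>I. f i x)) has_sum (s j + (\<Sum>i\<in>I. s i))) A"
    by (rule has_sum_add) (use insert in auto)
  then show ?case using insert by simp
qed

lemma cc_has_sum:
  assumes "z \<in> II"
  shows "((\<lambda>k. cc a k * x_of_z z ^ k) has_sum f_aux a z) {1..}"
    and "asum (\<lambda>k. cc a k * x_of_z z ^ k) ({1..})"
proof -
  have x: "\<bar>x_of_z z\<bar> < 1/4" by (rule II_x[OF assms])
  have "(\<lambda>k. cc a k * x_of_z z ^ k) sums GG a (x_of_z z)"
    unfolding GG_def by (rule summable_sums[OF cc_summable[OF x]])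
  then have "((\<lambda>k. cc a k * x_of_z z ^ k) has_sum GG a (x_of_z z)) UNIV"
    by (rule norm_summable_imp_has_sum[OF cc_abs_summable[OF x]])
  moreover have "((\<lambda>k. cc a k * x_of_z z ^ k) has_sum GG a (x_of_z z)) UNIV
     \<longleftrightarrow> ((\<lambda>k. cc a k * x_of_z z ^ k) has_sum GG a (x_of_z z)) {1..}"
    by (rule has_sum_cong_neutral) (auto simp: cc_def not_less_eq_eq)
  ultimately show "((\<lambda>k. cc a k * x_of_z z ^ k) has_sum f_aux a z) {1..}"
    using f_aux_GG[OF assms] by simp
  have "summable (\<lambda>k. norm (norm (cc a k * x_of_z z ^ k)))"
    using cc_abs_summable[OF x] by simp
  then have "((\<lambda>k. norm (cc a k * x_of_z z ^ k)) has_sum (\<Sum>k. norm (cc a k * x_of_z z ^ k))) UNIV"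
    by (rule norm_summable_imp_has_sum) (rule summable_sums[OF cc_abs_summable[OF x]])
  then have "asum (\<lambda>k. cc a k * x_of_z z ^ k) (UNIV)" by (auto simp: summable_on_def)
  then show "asum (\<lambda>k. cc a k * x_of_z z ^ k) ({1..})"
    by (rule summable_on_subset_banach) simp
qed

lemma has_sum_times:
  fixes u :: "'a \<Rightarrow> real" and v :: "'b \<Rightarrow> real"
  assumes u: "(u has_sum a) A" and v: "(v has_sum b) B"
    and ua: "asum u (A)" and va: "asum v B"
  shows "((\<lambda>(x,y). u x * v y) has_sum a*b) (A \<times> B)"
    and "asum (\<lambda>(x,y). u x * v y) ((A \<times> B))"
proof -
  show abs: "asum (\<lambda>(x,y). u x * v y) ((A \<times> B))"
  proof (rule Infinite_Sum.abs_summable_on_Sigma_iff[THEN iffD2], intro conjI ballI)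
    fix x assume "x \<in> A"
    have "(\<lambda>y. norm (u x) * norm (v y)) summable_on B" by (rule summable_on_cmult_right[OF va])
    then show "asum (\<lambda>y. case (x, y) of (x, y) \<Rightarrow> u x * v y) (B)" by (simp add: abs_mult)
  next
    have e: "(\<Sum>\<^sub>\<infinity>y\<in>B. norm (case (x, y) of (x, y) \<Rightarrow> u x * v y)) = norm (u x) * (\<Sum>\<^sub>\<infinity>y\<in>B. norm (v y))" for x
      by (simp add: abs_mult infsum_cmult_right')
    have "(\<lambda>x. norm (u x) * (\<Sum>\<^sub>\<infinity>y\<in>B. norm (v y))) summable_on A" by (rule summable_on_cmult_left[OF ua])
    show "asum (\<lambda>x. \<Sum>\<^sub>\<infinity>y\<in>B. norm (case (x, y) of (x, y) \<Rightarrow> u x * v y)) (A)"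
    proof -
      have nn: "(\<Sum>\<^sub>\<infinity>y\<in>B. norm (v y)) \<ge> 0" by (rule infsum_nonneg) simp
      show ?thesis unfolding e using \<open>(\<lambda>x. norm (u x) * (\<Sum>\<^sub>\<infinity>y\<in>B. norm (v y))) summable_on A\<close> nn
        by (simp add: abs_mult)
    qed
  qed
  show "((\<lambda>(x,y). u x * v y) has_sum a*b) (A \<times> B)"
  proof (rule has_sum_SigmaI[where g="\<lambda>x. u x * b"])
    fix x assume "x \<in> A"
    show "((\<lambda>y. case (x, y) of (x, y) \<Rightarrow> u x * v y) has_sum u x * b) B"
      using has_sum_cmult_right[OF v, of "u x"] by simp
  next
    show "((\<lambda>x. u x * b) has_sum a * b) A" by (rule has_sum_cmult_left[OF u])
  next
    show "(\<lambda>(x,y). u x * v y) summable_on A \<times> B" by (rule abs_summable_summable[OF abs])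
  qed
qed

definition LL :: "'a set \<Rightarrow> nat \<Rightarrow> 'a list set" where
  "LL A n = {mu. length mu = n \<and> (\<forall>i<n. mu ! i \<in> A)}"

lemma LL_Suc: "LL A (Suc n) = (\<lambda>(k, mu). k # mu) ` (A \<times> LL A n)"
proof (intro set_eqI iffI)
  fix mu assume "mu \<in> LL A (Suc n)"
  then obtain k mu' where mu: "mu = k # mu'" "length mu' = n"
    unfolding LL_def by (cases mu) auto
  have all: "\<forall>i<Suc n. mu ! i \<in> A" using \<open>mu \<in> LL A (Suc n)\<close> unfolding LL_def by simp
  have "k \<in> A" using all[rule_format, of 0] mu by simp
  moreover have "mu' \<in> LL A n" unfolding LL_def
  proof (intro CollectI conjI allI impI)
    show "length mu' = n" by (rule mu(2))
    fix i assume "i < n"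
    then show "mu' ! i \<in> A" using all[rule_format, of "Suc i"] mu by simp
  qed
  ultimately have "k \<in> A" "mu' \<in> LL A n" by auto
  with mu show "mu \<in> (\<lambda>(k, mu). k # mu) ` (A \<times> LL A n)" by force
next
  fix mu assume "mu \<in> (\<lambda>(k, mu). k # mu) ` (A \<times> LL A n)"
  then show "mu \<in> LL A (Suc n)" unfolding LL_def by (auto simp: less_Suc_eq_0_disj)
qed

lemma has_sum_prodL:
  fixes g :: "nat \<Rightarrow> 'a \<Rightarrow> real"
  assumes "\<And>i. i < n \<Longrightarrow> (g i has_sum s i) A" "\<And>i. i < n \<Longrightarrow> asum (g i) A"
  shows "((\<lambda>mu. \<Prod>i<n. g i (mu ! i)) has_sum (\<Prod>i<n. s i)) (LL A n)
     \<and> asum (\<lambda>mu. \<Prod>i<n. g i (mu ! i)) ((LL A n))"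
  using assms
proof (induction n arbitrary: g s)
  case 0
  have "LL A 0 = {[]}" unfolding LL_def by auto
  then show ?case by (simp add: has_sum_finiteI)
next
  case (Suc n)
  have IH: "((\<lambda>mu. \<Prod>i<n. g (Suc i) (mu ! i)) has_sum (\<Prod>i<n. s (Suc i))) (LL A n)
     \<and> asum (\<lambda>mu. \<Prod>i<n. g (Suc i) (mu ! i)) ((LL A n))"
    by (rule Suc.IH) (use Suc.prems in auto)
  have h1: "((\<lambda>(k, mu). g 0 k * (\<Prod>i<n. g (Suc i) (mu ! i))) has_sum s 0 * (\<Prod>i<n. s (Suc i))) (A \<times> LL A n)"
    and h2: "asum (\<lambda>(k, mu). g 0 k * (\<Prod>i<n. g (Suc i) (mu ! i))) ((A \<times> LL A n))"
    using has_sum_times[where u="g 0" and a="s 0" and A=A and v="\<lambda>mu. \<Prod>i<n. g (Suc i) (mu ! i)"] IH Suc.prems by auto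
  have inj: "inj_on (\<lambda>(k, mu). k # mu) (A \<times> LL A n)" by (auto simp: inj_on_def)
  have comp: "((\<lambda>mu. \<Prod>i<Suc n. g i (mu ! i)) \<circ> (\<lambda>(k, mu). k # mu))
      = (\<lambda>(k, mu). g 0 k * (\<Prod>i<n. g (Suc i) (mu ! i)))"
    by (auto simp: prod.lessThan_Suc_shift simp del: prod.lessThan_Suc)
  have cn: "(\<lambda>x. norm ((\<lambda>mu. \<Prod>i<Suc n. g i (mu ! i)) x)) \<circ> (\<lambda>(k, mu). k # mu)
      = (\<lambda>x. norm ((\<lambda>(k, mu). g 0 k * (\<Prod>i<n. g (Suc i) (mu ! i))) x))"
    using comp by (auto simp: fun_eq_iff)
  have "((\<lambda>mu. \<Prod>i<Suc n. g i (mu ! i)) has_sum s 0 * (\<Prod>i<n. s (Suc i))) (LL A (Suc n))"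
    unfolding LL_Suc has_sum_reindex[OF inj] comp by (rule h1)
  moreover have "asum (\<lambda>mu. \<Prod>i<Suc n. g i (mu ! i)) ((LL A (Suc n)))"
    unfolding LL_Suc summable_on_reindex[OF inj] cn by (rule h2)
  moreover have ps: "(\<Prod>i<Suc n. s i) = s 0 * (\<Prod>i<n. s (Suc i))" by (rule prod.lessThan_Suc_shift)
  ultimately show ?case by (simp only: ps)
qed




definition permL :: "(nat \<Rightarrow> nat) \<Rightarrow> nat list \<Rightarrow> nat list" where
  "permL p mu = map (\<lambda>i. mu ! p i) [0..<length mu]"

lemma permL_length[simp]: "length (permL p mu) = length mu" by (simp add: permL_def)
lemma permL_nth[simp]: "i < length mu \<Longrightarrow> permL p mu ! i = mu ! p i" by (simp add: permL_def)

lemma permL_sum: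
  assumes "p permutes {..<length mu}"
  shows "sum_list (permL p mu) = sum_list mu"
proof -
  have "sum_list (permL p mu) = (\<Sum>i\<in>{..<length mu}. mu ! p i)"
    by (simp add: sum_list_sum_nth atLeast0LessThan)
  also have "\<dots> = (\<Sum>i\<in>{..<length mu}. mu ! i)"
    using sum.permute[OF assms, of "\<lambda>i. mu ! i"] by (simp add: o_def)
  also have "\<dots> = sum_list mu" by (simp add: sum_list_sum_nth atLeast0LessThan)
  finally show ?thesis .
qed

lemma CL_map:
  assumes q: "q permutes {..<n}" and len: "length mu = n" "length mu' = n"
    and sm: "sum_list mu' = sum_list mu"
    and nth: "\<And>i. i < n \<Longrightarrow> mu' ! (q i) = mu ! i"
    and l: "l \<in> cycle_labellings mu perm"
  shows "restrict (q \<circ> l) {0..<sum_list mu} \<in> cycle_labellings mu' perm"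
proof -
  let ?D = "{0..<sum_list mu}"
  let ?l = "restrict (q \<circ> l) ?D"
  have lP: "l \<in> ?D \<rightarrow>\<^sub>E {0..<n}" and
    lC: "\<And>i. i < n \<Longrightarrow> card {x\<in>?D. l x = i} = mu ! i \<and>
          (\<forall>x\<in>?D. l x = i \<longrightarrow> (\<forall>y. (y \<in> ?D \<and> l y = i) \<longleftrightarrow> (\<exists>k. (perm ^^ k) x = y)))"
    using l len unfolding cycle_labellings_def by auto
  have qi: "inv q permutes {..<n}" by (rule permutes_inv[OF q])
  have fib: "x \<in> ?D \<Longrightarrow> (?l x = j) \<longleftrightarrow> (l x = inv q j)" for x j
    using permutes_inverses[OF q] by (auto)
  have P: "?l \<in> ?D \<rightarrow>\<^sub>E {0..<n}"
  proof
    fix x assume "x \<in> ?D"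
    then have "l x \<in> {..<n}" using lP by auto
    then have "q (l x) \<in> {..<n}" using permutes_in_image[OF q] by simp
    then show "?l x \<in> {0..<n}" using \<open>x \<in> ?D\<close> by simp
  qed simp
  show ?thesis unfolding cycle_labellings_def
  proof (intro CollectI conjI allI impI ballI)
    show "?l \<in> {0..<sum_list mu'} \<rightarrow>\<^sub>E {0..<length mu'}" using P sm len by simp
  next
    fix j assume j: "j < length mu'"
    then have jn: "j < n" using len by simp
    have ij: "inv q j < n" using permutes_in_image[OF qi] jn by simp
    have "{x \<in> {0..<sum_list mu'}. ?l x = j} = {x\<in>?D. l x = inv q j}" using fib sm by auto
    then have "card {x \<in> {0..<sum_list mu'}. ?l x = j} = mu ! inv q j" using lC[OF ij] by simp
    also have "\<dots> = mu' ! j" using nth[OF ij] permutes_inverses[OF q] by simp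
    finally show "card {x \<in> {0..<sum_list mu'}. ?l x = j} = mu' ! j" .
    fix x assume x: "x \<in> {0..<sum_list mu'}" and lx: "?l x = j"
    have x': "x \<in> ?D" using x sm by simp
    have lx': "l x = inv q j" using fib[OF x'] lx by simp
    fix y
    show "(y \<in> {0..<sum_list mu'} \<and> ?l y = j) \<longleftrightarrow> (\<exists>k. (perm ^^ k) x = y)"
    proof -
      have H: "(y \<in> ?D \<and> l y = inv q j) \<longleftrightarrow> (\<exists>k. (perm ^^ k) x = y)"
        using lC[OF ij] x' lx' by blast
      have "(y \<in> {0..<sum_list mu'} \<and> ?l y = j) \<longleftrightarrow> (y \<in> ?D \<and> l y = inv q j)"
        using fib[of y j] sm by (metis (no_types, lifting))
      then show ?thesis using H by simp
    qed
  qed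
qed

lemma restrict_back:
  assumes "q permutes {..<n}" "l \<in> D \<rightarrow>\<^sub>E {0..<n}"
  shows "restrict (inv q \<circ> restrict (q \<circ> l) D) D = l"
proof
  fix x show "restrict (inv q \<circ> restrict (q \<circ> l) D) D x = l x"
    using assms permutes_inverses[OF assms(1)] by (cases "x \<in> D") (auto simp: PiE_def extensional_def)
qed

lemma CL_PiE: "l \<in> cycle_labellings mu perm \<Longrightarrow> l \<in> {0..<sum_list mu} \<rightarrow>\<^sub>E {0..<length mu}"
  unfolding cycle_labellings_def by auto

lemma mono_hurwitz_perm:
  assumes p: "p permutes {..<length mu}"
  shows "mono_hurwitz g (permL p mu) = mono_hurwitz g mu"
proof -
  define n where "n = length mu"
  define mu' where "mu' = permL p mu"
  have len: "length mu = n" "length mu' = n" unfolding n_def mu'_def by simp_all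
  have sm: "sum_list mu' = sum_list mu" unfolding mu'_def by (rule permL_sum[OF p])
  have pn: "p permutes {..<n}" using p n_def by simp
  have pin: "inv p permutes {..<n}" by (rule permutes_inv[OF pn])
  have n1: "\<And>i. i < n \<Longrightarrow> mu' ! (inv p i) = mu ! i"
    unfolding mu'_def using permutes_inverses[OF pn] permutes_in_image[OF pin] len by simp
  have n2: "\<And>i. i < n \<Longrightarrow> mu ! (p i) = mu' ! i"
    unfolding mu'_def using len by simp
  define d where "d = sum_list mu"
  define m where "m = 2 * g + n + d - 2"
  define A where "A = {(ts, l). ts \<in> monotone_tuples d m \<and> l \<in> cycle_labellings mu (transp_prod ts)}"
  define A' where "A' = {(ts, l). ts \<in> monotone_tuples d m \<and> l \<in> cycle_labellings mu' (transp_prod ts)}"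
  define F where "F = (\<lambda>(ts::(nat\<times>nat) list, l::nat\<Rightarrow>nat). (ts, restrict (inv p \<circ> l) {0..<d}))"
  define G where "G = (\<lambda>(ts::(nat\<times>nat) list, l::nat\<Rightarrow>nat). (ts, restrict (p \<circ> l) {0..<d}))"
  have "bij_betw F A A'"
  proof (rule bij_betw_byWitness[where f'=G])
    show "\<forall>a\<in>A. G (F a) = a"
    proof
      fix a assume "a \<in> A"
      then obtain ts l where a: "a = (ts, l)" "l \<in> cycle_labellings mu (transp_prod ts)" unfolding A_def by auto
      have "l \<in> {0..<d} \<rightarrow>\<^sub>E {0..<n}" using CL_PiE[OF a(2)] len d_def by simp
      then show "G (F a) = a" using restrict_back[OF pin, of l "{0..<d}"] a
        unfolding F_def G_def by (simp add: inv_inv_eq[OF permutes_bij[OF pn]])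
    qed
    show "\<forall>a\<in>A'. F (G a) = a"
    proof
      fix a assume "a \<in> A'"
      then obtain ts l where a: "a = (ts, l)" "l \<in> cycle_labellings mu' (transp_prod ts)" unfolding A'_def by auto
      have "l \<in> {0..<d} \<rightarrow>\<^sub>E {0..<n}" using CL_PiE[OF a(2)] len d_def sm by simp
      then show "F (G a) = a" using restrict_back[OF pn, of l "{0..<d}"] a
        unfolding F_def G_def by simp
    qed
    show "F ` A \<subseteq> A'"
    proof
      fix b assume "b \<in> F ` A"
      then obtain ts l where a: "b = F (ts, l)" "ts \<in> monotone_tuples d m" "l \<in> cycle_labellings mu (transp_prod ts)"
        unfolding A_def by auto
      have "restrict (inv p \<circ> l) {0..<sum_list mu} \<in> cycle_labellings mu' (transp_prod ts)"
        by (rule CL_map[OF pin len sm n1 a(3)])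
      then show "b \<in> A'" using a unfolding F_def A'_def d_def by simp
    qed
    show "G ` A' \<subseteq> A"
    proof
      fix b assume "b \<in> G ` A'"
      then obtain ts l where a: "b = G (ts, l)" "ts \<in> monotone_tuples d m" "l \<in> cycle_labellings mu' (transp_prod ts)"
        unfolding A'_def by auto
      have "restrict (p \<circ> l) {0..<sum_list mu'} \<in> cycle_labellings mu (transp_prod ts)"
        by (rule CL_map[OF pn len(2) len(1) sm[symmetric] n2 a(3)])
      then show "b \<in> A" using a sm unfolding G_def A_def d_def by simp
    qed
  qed
  then have "card A = card A'" by (rule bij_betw_same_card)
  then show ?thesis unfolding mono_hurwitz_def Let_def A_def A'_def d_def m_def mu'_def[symmetric]
    using sm len by simp
qed




lemma quot_deriv:
  fixes p :: "real poly"
  assumes z: "z \<noteq> 2" and k: "k \<ge> 1"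
  shows "((\<lambda>z. poly p z / (z - 2)^k) has_field_derivative
           (poly (pderiv p) z * (z - 2) - real k * poly p z) / (z - 2)^(k+1)) (at z)"
proof -
  have h: "((\<lambda>x. x - 2) has_field_derivative 1 - 0) (at z)"
    by (rule DERIV_diff[OF DERIV_ident DERIV_const])
  have d2: "((\<lambda>x. (x - 2)^k) has_field_derivative of_nat k * ((1 - 0) * (z - 2) ^ (k - Suc 0))) (at z)"
    by (rule DERIV_power[OF h])
  have nz0: "(z - 2)^k \<noteq> 0" using z by simp
  have D: "((\<lambda>z. poly p z / (z - 2)^k) has_field_derivative
      (poly (pderiv p) z * (z - 2)^k - poly p z * (of_nat k * ((1 - 0) * (z - 2) ^ (k - Suc 0)))) / ((z - 2)^k * (z - 2)^k)) (at z)"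
    by (rule DERIV_divide[OF poly_DERIV d2 nz0])
  obtain j where j: "k = Suc j" using k by (cases k) auto
  define w where "w = z - 2"
  define A where "A = poly (pderiv p) z * w - real k * poly p z"
  have wnz: "w \<noteq> 0" "w^j \<noteq> 0" using z by (simp_all add: w_def)
  have num: "poly (pderiv p) z * w^k - poly p z * (of_nat k * ((1 - 0) * w ^ (k - Suc 0))) = w^j * A"
    unfolding A_def j by (simp add: algebra_simps)
  have kk: "k + k = j + (k + 1)" using j by simp
  have den: "w^k * w^k = w^j * w^(k+1)" by (simp only: power_add[symmetric] kk)
  have "(poly (pderiv p) z * w^k - poly p z * (of_nat k * ((1 - 0) * w ^ (k - Suc 0)))) / (w^k * w^k)
      = A / w^(k+1)"
    unfolding num den by (rule mult_divide_mult_cancel_left[OF wnz(2)])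
  then show ?thesis using D unfolding A_def w_def by simp
qed

lemma f_aux_poly: "\<exists>p. \<forall>z. z \<noteq> 2 \<longrightarrow> f_aux a z = poly p z / (z - 2)^(2*a+1)"
proof (induction a)
  case 0
  show ?case by (rule exI[of _ "[:2, -2:]"]) simp
next
  case (Suc a)
  then obtain p where p: "\<And>z. z \<noteq> 2 \<Longrightarrow> f_aux a z = poly p z / (z - 2)^(2*a+1)" by blast
  define k where "k = 2*a+1"
  define q where "q = - ([:0, 1:] * [:-1, 1:] * (pderiv p * [:-2, 1:] - smult (real k) p))"
  show ?case
  proof (intro exI allI impI)
    fix z :: real assume z: "z \<noteq> 2"
    have "((\<lambda>z. poly p z / (z - 2)^k) has_field_derivative
           (poly (pderiv p) z * (z - 2) - real k * poly p z) / (z - 2)^(k+1)) (at z)"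
      by (rule quot_deriv[OF z]) (simp add: k_def)
    then have "(f_aux a has_field_derivative
           (poly (pderiv p) z * (z - 2) - real k * poly p z) / (z - 2)^(k+1)) (at z)"
      by (rule has_field_derivative_transform_within_open[where S="-{2}"]) (use z p k_def in auto)
    then have d: "deriv (f_aux a) z = (poly (pderiv p) z * (z - 2) - real k * poly p z) / (z - 2)^(k+1)"
      by (rule DERIV_imp_deriv)
    have nz: "z - 2 \<noteq> 0" using z by simp
    have "f_aux (Suc a) z = - (z * (z - 1) / (z - 2)) * ((poly (pderiv p) z * (z - 2) - real k * poly p z) / (z - 2)^(k+1))"
      by (simp add: d)
    also have "\<dots> = poly q z / (z - 2)^(k+2)"
    proof -
      have pq: "poly q z = - (z * (z - 1) * (poly (pderiv p) z * (z - 2) - real k * poly p z))"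
      proof -
        have h1: "poly [:0,1:] z = z" and h2: "poly [:-1,1:] z = z - 1" and h3: "poly [:-2,1:] z = z - 2"
          by simp_all
        show ?thesis unfolding q_def poly_minus poly_mult poly_diff poly_smult h1 h2 h3 by (rule refl)
      qed
      have kk2: "k + 2 = Suc (k + 1)" by simp
      have e1: "(z - 2)^(k+2) = (z - 2) * (z - 2)^(k+1)" by (simp only: kk2 power_Suc)
      have "- (z * (z - 1) / (z - 2)) * ((poly (pderiv p) z * (z - 2) - real k * poly p z) / (z - 2)^(k+1))
         = (- (z * (z - 1)) * (poly (pderiv p) z * (z - 2) - real k * poly p z)) / ((z - 2) * (z - 2)^(k+1))"
        by (simp only: minus_divide_left times_divide_times_eq)
      also have "\<dots> = poly q z / (z - 2)^(k+2)" by (simp only: pq e1 mult_minus_left)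
      finally show ?thesis .
    qed
    finally have fin: "f_aux (Suc a) z = poly q z / (z - 2)^(k+2)" .
    have kk: "k + 2 = 2 * Suc a + 1" by (simp add: k_def)
    show "f_aux (Suc a) z = poly q z / (z - 2)^(2 * Suc a + 1)" using fin by (simp only: kk)
  qed
qed




definition BOX :: "(nat \<Rightarrow> nat set) \<Rightarrow> nat \<Rightarrow> nat list set" where
  "BOX K n = {e. length e = n \<and> (\<forall>i<n. e ! i \<in> K i)}"

lemma BOX_Suc: "BOX K (Suc n) = (\<lambda>(k, e). k # e) ` (K 0 \<times> BOX (\<lambda>i. K (Suc i)) n)"
proof (intro set_eqI iffI)
  fix mu assume as: "mu \<in> BOX K (Suc n)"
  then obtain k mu' where mu: "mu = k # mu'" "length mu' = n"
    unfolding BOX_def by (cases mu) auto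
  have all: "\<forall>i<Suc n. mu ! i \<in> K i" using as unfolding BOX_def by simp
  have "k \<in> K 0" using all[rule_format, of 0] mu by simp
  moreover have "mu' \<in> BOX (\<lambda>i. K (Suc i)) n" unfolding BOX_def
  proof (intro CollectI conjI allI impI)
    show "length mu' = n" by (rule mu(2))
    fix i assume "i < n"
    then show "mu' ! i \<in> K (Suc i)" using all[rule_format, of "Suc i"] mu by simp
  qed
  ultimately show "mu \<in> (\<lambda>(k, e). k # e) ` (K 0 \<times> BOX (\<lambda>i. K (Suc i)) n)" using mu by force
next
  fix mu assume "mu \<in> (\<lambda>(k, e). k # e) ` (K 0 \<times> BOX (\<lambda>i. K (Suc i)) n)"
  then show "mu \<in> BOX K (Suc n)" unfolding BOX_def by (auto simp: less_Suc_eq_0_disj)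
qed

lemma BOX_finite: "(\<And>i. i < n \<Longrightarrow> finite (K i)) \<Longrightarrow> finite (BOX K n)"
proof (induction n arbitrary: K)
  case 0
  have "BOX K 0 = {[]}" unfolding BOX_def by auto
  then show ?case by simp
next
  case (Suc n)
  have "finite (BOX (\<lambda>i. K (Suc i)) n)" by (rule Suc.IH) (use Suc.prems in auto)
  moreover have "finite (K 0)" using Suc.prems by auto
  ultimately show ?case unfolding BOX_Suc by auto
qed

lemma prod_sum_BOX:
  fixes h :: "nat \<Rightarrow> nat \<Rightarrow> real"
  assumes "\<And>i. i < n \<Longrightarrow> finite (K i)"
  shows "(\<Prod>i<n. \<Sum>k\<in>K i. h i k) = (\<Sum>e\<in>BOX K n. \<Prod>i<n. h i (e ! i))"
  using assms
proof (induction n arbitrary: K h)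
  case 0
  have "BOX K 0 = {[]}" unfolding BOX_def by auto
  then show ?case by simp
next
  case (Suc n)
  have fin: "finite (BOX (\<lambda>i. K (Suc i)) n)" by (rule BOX_finite) (use Suc.prems in auto)
  have fK: "finite (K 0)" using Suc.prems by auto
  have IH: "(\<Prod>i<n. \<Sum>k\<in>K (Suc i). h (Suc i) k) = (\<Sum>e\<in>BOX (\<lambda>i. K (Suc i)) n. \<Prod>i<n. h (Suc i) (e ! i))"
    by (rule Suc.IH) (use Suc.prems in auto)
  have inj: "inj_on (\<lambda>(k, e). k # e) (K 0 \<times> BOX (\<lambda>i. K (Suc i)) n)" by (auto simp: inj_on_def)
  have "(\<Prod>i<Suc n. \<Sum>k\<in>K i. h i k) = (\<Sum>k\<in>K 0. h 0 k) * (\<Prod>i<n. \<Sum>k\<in>K (Suc i). h (Suc i) k)"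
    by (rule prod.lessThan_Suc_shift)
  also have "\<dots> = (\<Sum>k\<in>K 0. h 0 k) * (\<Sum>e\<in>BOX (\<lambda>i. K (Suc i)) n. \<Prod>i<n. h (Suc i) (e ! i))"
    by (simp only: IH)
  also have "\<dots> = (\<Sum>(k, e)\<in>K 0 \<times> BOX (\<lambda>i. K (Suc i)) n. h 0 k * (\<Prod>i<n. h (Suc i) (e ! i)))"
    by (simp add: sum_product sum.cartesian_product)
  also have "\<dots> = (\<Sum>x\<in>K 0 \<times> BOX (\<lambda>i. K (Suc i)) n. (\<lambda>e. \<Prod>i<Suc n. h i (e ! i)) ((\<lambda>(k, e). k # e) x))"
    by (intro sum.cong refl) (auto simp: prod.lessThan_Suc_shift simp del: prod.lessThan_Suc)
  also have "\<dots> = (\<Sum>e\<in>BOX K (Suc n). \<Prod>i<Suc n. h i (e ! i))"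
    unfolding BOX_Suc by (rule sum.reindex[OF inj, symmetric, unfolded o_def])
  finally show ?case .
qed

definition is_mp :: "nat \<Rightarrow> ((nat \<Rightarrow> real) \<Rightarrow> real) \<Rightarrow> bool" where
  "is_mp n F \<longleftrightarrow> (\<exists>Q. finite {e. length e = n \<and> Q e \<noteq> 0} \<and> (\<forall>z. F z = mpoly_eval Q n z))"

lemma mpoly_eval_superset:
  assumes "finite S" "{e. length e = n \<and> Q e \<noteq> 0} \<subseteq> S" "S \<subseteq> {e. length e = n}"
  shows "mpoly_eval Q n z = (\<Sum>e\<in>S. Q e * (\<Prod>i<n. z i ^ (e ! i)))"
  unfolding mpoly_eval_def
  by (rule sum.mono_neutral_left) (use assms in auto)

lemma is_mp_0: "is_mp n (\<lambda>z. 0)"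
  unfolding is_mp_def by (rule exI[of _ "\<lambda>_. 0"]) (simp add: mpoly_eval_def)

lemma is_mp_add:
  assumes "is_mp n F" "is_mp n G"
  shows "is_mp n (\<lambda>z. F z + G z)"
proof -
  obtain Q1 where Q1: "finite {e. length e = n \<and> Q1 e \<noteq> 0}" "\<And>z. F z = mpoly_eval Q1 n z"
    using assms(1) unfolding is_mp_def by blast
  obtain Q2 where Q2: "finite {e. length e = n \<and> Q2 e \<noteq> 0}" "\<And>z. G z = mpoly_eval Q2 n z"
    using assms(2) unfolding is_mp_def by blast
  define S where "S = {e. length e = n \<and> Q1 e \<noteq> 0} \<union> {e. length e = n \<and> Q2 e \<noteq> 0}"
  have fS: "finite S" using Q1 Q2 unfolding S_def by simp
  have sub: "{e. length e = n \<and> Q1 e + Q2 e \<noteq> 0} \<subseteq> S" unfolding S_def by auto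
  show ?thesis unfolding is_mp_def
  proof (intro exI conjI allI)
    show "finite {e. length e = n \<and> (\<lambda>e. Q1 e + Q2 e) e \<noteq> 0}" using fS sub finite_subset by auto
    fix z
    have "F z + G z = (\<Sum>e\<in>S. Q1 e * (\<Prod>i<n. z i ^ (e ! i))) + (\<Sum>e\<in>S. Q2 e * (\<Prod>i<n. z i ^ (e ! i)))"
      unfolding Q1(2) Q2(2)
      by (subst mpoly_eval_superset[OF fS], (auto simp: S_def)[2])+ (rule refl)
    also have "\<dots> = mpoly_eval (\<lambda>e. Q1 e + Q2 e) n z"
      by (subst mpoly_eval_superset[OF fS sub]) (auto simp: S_def sum.distrib algebra_simps)
    finally show "F z + G z = mpoly_eval (\<lambda>e. Q1 e + Q2 e) n z" .
  qed
qed

lemma is_mp_cmult: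
  assumes "is_mp n F"
  shows "is_mp n (\<lambda>z. c * F z)"
proof -
  obtain Q where Q: "finite {e. length e = n \<and> Q e \<noteq> 0}" "\<And>z. F z = mpoly_eval Q n z"
    using assms unfolding is_mp_def by blast
  define S where "S = {e. length e = n \<and> Q e \<noteq> 0}"
  have sub: "{e. length e = n \<and> c * Q e \<noteq> 0} \<subseteq> S" unfolding S_def by auto
  show ?thesis unfolding is_mp_def
  proof (intro exI conjI allI)
    show "finite {e. length e = n \<and> (\<lambda>e. c * Q e) e \<noteq> 0}" using Q(1) sub finite_subset unfolding S_def by auto
    fix z
    have "c * F z = c * (\<Sum>e\<in>S. Q e * (\<Prod>i<n. z i ^ (e ! i)))"
      unfolding Q(2) S_def mpoly_eval_def by simp
    also have "\<dots> = mpoly_eval (\<lambda>e. c * Q e) n z"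
      by (subst mpoly_eval_superset[OF _ sub]) (use Q(1) in \<open>auto simp: S_def sum_distrib_left algebra_simps\<close>)
    finally show "c * F z = mpoly_eval (\<lambda>e. c * Q e) n z" .
  qed
qed

lemma is_mp_sum:
  assumes "finite I" "\<And>a. a \<in> I \<Longrightarrow> is_mp n (F a)"
  shows "is_mp n (\<lambda>z. \<Sum>a\<in>I. F a z)"
  using assms
proof (induction I rule: finite_induct)
  case empty then show ?case by (simp add: is_mp_0)
next
  case (insert j I)
  have "is_mp n (\<lambda>z. F j z + (\<Sum>a\<in>I. F a z))"
    by (rule is_mp_add) (use insert in auto)
  then show ?case using insert by simp
qed

lemma is_mp_prod:
  fixes P :: "nat \<Rightarrow> real poly"
  shows "is_mp n (\<lambda>z. \<Prod>i<n. poly (P i) (z i))"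
proof -
  define K where "K i = {..degree (P i)}" for i
  define Q where "Q e = (\<Prod>i<n. coeff (P i) (e ! i))" for e
  have fB: "finite (BOX K n)" by (rule BOX_finite) (simp add: K_def)
  have sub: "{e. length e = n \<and> Q e \<noteq> 0} \<subseteq> BOX K n"
  proof
    fix e assume "e \<in> {e. length e = n \<and> Q e \<noteq> 0}"
    then have "length e = n" "\<And>i. i < n \<Longrightarrow> coeff (P i) (e ! i) \<noteq> 0" unfolding Q_def by auto
    then show "e \<in> BOX K n" unfolding BOX_def K_def by (auto intro: le_degree)
  qed
  show ?thesis unfolding is_mp_def
  proof (intro exI conjI allI)
    show "finite {e. length e = n \<and> Q e \<noteq> 0}" using fB sub finite_subset by auto
    fix z
    have "(\<Prod>i<n. poly (P i) (z i)) = (\<Prod>i<n. \<Sum>k\<in>K i. coeff (P i) k * z i ^ k)"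
      unfolding K_def by (simp add: poly_altdef)
    also have "\<dots> = (\<Sum>e\<in>BOX K n. \<Prod>i<n. coeff (P i) (e ! i) * z i ^ (e ! i))"
      by (rule prod_sum_BOX) (simp add: K_def)
    also have "\<dots> = (\<Sum>e\<in>BOX K n. Q e * (\<Prod>i<n. z i ^ (e ! i)))"
      unfolding Q_def by (simp add: prod.distrib)
    also have "\<dots> = mpoly_eval Q n z"
      by (rule mpoly_eval_superset[OF fB sub, symmetric]) (auto simp: BOX_def)
    finally show "(\<Prod>i<n. poly (P i) (z i)) = mpoly_eval Q n z" .
  qed
qed




lemma comps_LL: "comps n = LL {1..} n"
  unfolding comps_def LL_def by auto

lemma region_II: "(2 / (1 + sqrt 2) < w \<and> w < 2) \<longleftrightarrow> w \<in> II"
  unfolding II_def by simp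

lemma part1:
  fixes C :: "nat list \<Rightarrow> real"
  assumes C_fin: "finite {a. length a = n \<and> C a \<noteq> 0}"
    and poly: "\<forall>mu\<in>comps n. mono_hurwitz g mu =
        (\<Prod>i<n. real ((2 * (mu ! i)) choose (mu ! i))) *
        (\<Sum>a\<in>{a. length a = n \<and> C a \<noteq> 0}. C a * (\<Prod>i<n. real (mu ! i) ^ (a ! i)))"
    and z: "\<forall>i<n. z i \<in> II"
  shows "((\<lambda>mu. mono_hurwitz g mu * (\<Prod>i<n. x_of_z (z i) ^ (mu ! i))) has_sum
              (\<Sum>a\<in>{a. length a = n \<and> C a \<noteq> 0}. C a * (\<Prod>i<n. f_aux (a ! i) (z i)))) (comps n)"
proof -
  define S where "S = {a. length a = n \<and> C a \<noteq> 0}"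
  have each: "((\<lambda>mu. C a * (\<Prod>i<n. cc (a ! i) (mu ! i) * x_of_z (z i) ^ (mu ! i))) has_sum
      C a * (\<Prod>i<n. f_aux (a ! i) (z i))) (comps n)" for a
  proof -
    have "((\<lambda>mu. \<Prod>i<n. cc (a ! i) (mu ! i) * x_of_z (z i) ^ (mu ! i)) has_sum (\<Prod>i<n. f_aux (a ! i) (z i))) (LL {1..} n)
     \<and> asum (\<lambda>mu. \<Prod>i<n. cc (a ! i) (mu ! i) * x_of_z (z i) ^ (mu ! i)) (LL {1..} n)"
      by (rule has_sum_prodL[where g="\<lambda>i k. cc (a ! i) k * x_of_z (z i) ^ k"]) (use z cc_has_sum in auto)
    then show ?thesis unfolding comps_LL by (intro has_sum_cmult_right) simp
  qed
  have sum: "((\<lambda>mu. \<Sum>a\<in>S. C a * (\<Prod>i<n. cc (a ! i) (mu ! i) * x_of_z (z i) ^ (mu ! i))) has_sum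
      (\<Sum>a\<in>S. C a * (\<Prod>i<n. f_aux (a ! i) (z i)))) (comps n)"
    by (rule has_sum_finsum) (use C_fin each S_def in auto)
  have eq: "mono_hurwitz g mu * (\<Prod>i<n. x_of_z (z i) ^ (mu ! i))
      = (\<Sum>a\<in>S. C a * (\<Prod>i<n. cc (a ! i) (mu ! i) * x_of_z (z i) ^ (mu ! i)))" if mu: "mu \<in> comps n" for mu
  proof -
    have ccv: "cc (a ! i) (mu ! i) = real ((2 * (mu ! i)) choose (mu ! i)) * real (mu ! i) ^ (a ! i)" if "i < n" for a i
      using mu that unfolding comps_def cc_def by auto
    have "mono_hurwitz g mu * (\<Prod>i<n. x_of_z (z i) ^ (mu ! i))
       = (\<Sum>a\<in>S. C a * ((\<Prod>i<n. real ((2 * (mu ! i)) choose (mu ! i))) * (\<Prod>i<n. real (mu ! i) ^ (a ! i)) * (\<Prod>i<n. x_of_z (z i) ^ (mu ! i))))"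
      using poly mu unfolding S_def by (simp add: sum_distrib_left sum_distrib_right algebra_simps)
    also have "\<dots> = (\<Sum>a\<in>S. C a * (\<Prod>i<n. cc (a ! i) (mu ! i) * x_of_z (z i) ^ (mu ! i)))"
      by (intro sum.cong refl) (simp add: ccv prod.distrib[symmetric])
    finally show ?thesis .
  qed
  show ?thesis unfolding S_def[symmetric]
    using sum by (subst has_sum_cong[OF eq]) auto
qed




lemma permL_comps: "q permutes {..<n} \<Longrightarrow> a \<in> comps n \<Longrightarrow> permL q a \<in> comps n"
  unfolding comps_def using permutes_in_image[of q "{..<n}"] by auto

lemma permL_permL:
  assumes "a \<in> comps n" "\<And>i. i < n \<Longrightarrow> q i < n" "\<And>i. i < n \<Longrightarrow> q' (q i) = i"
  shows "permL q (permL q' a) = a"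
proof (rule nth_equalityI)
  show "length (permL q (permL q' a)) = length a" by simp
  fix i assume "i < length (permL q (permL q' a))"
  then have i: "i < n" using assms(1) unfolding comps_def by simp
  then show "permL q (permL q' a) ! i = a ! i" using assms(1,2,3) unfolding comps_def by simp
qed

lemma symR:
  fixes z :: "nat \<Rightarrow> real" and R :: "(nat \<Rightarrow> real) \<Rightarrow> real"
  assumes p: "p permutes {..<n}"
    and h1: "((\<lambda>mu. mono_hurwitz g mu * (\<Prod>i<n. x_of_z (z i) ^ (mu ! i))) has_sum R z) (comps n)"
    and h2: "((\<lambda>mu. mono_hurwitz g mu * (\<Prod>i<n. x_of_z ((z \<circ> p) i) ^ (mu ! i))) has_sum R (z \<circ> p)) (comps n)"
  shows "R (z \<circ> p) = R z"
proof -
  have pi: "inv p permutes {..<n}" by (rule permutes_inv[OF p])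
  have "((\<lambda>mu. mono_hurwitz g mu * (\<Prod>i<n. x_of_z ((z \<circ> p) i) ^ (mu ! i))) has_sum R z) (comps n)
     = ((\<lambda>mu. mono_hurwitz g mu * (\<Prod>i<n. x_of_z (z i) ^ (mu ! i))) has_sum R z) (comps n)"
  proof (rule has_sum_reindex_bij_witness[where j="permL (inv p)" and i="permL p"])
    fix a assume a: "a \<in> comps n"
    show "permL p (permL (inv p) a) = a"
      by (rule permL_permL[OF a]) (use permutes_in_image[OF p] permutes_inverses[OF p] in auto)
    show "permL (inv p) a \<in> comps n" by (rule permL_comps[OF pi a])
    have la: "length a = n" using a unfolding comps_def by simp
    have H: "mono_hurwitz g (permL (inv p) a) = mono_hurwitz g a"
      by (rule mono_hurwitz_perm) (use pi la in simp)
    have "(\<Prod>i<n. x_of_z (z i) ^ (permL (inv p) a ! i)) = (\<Prod>i<n. x_of_z (z i) ^ (a ! inv p i))"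
      using la by simp
    also have "\<dots> = (\<Prod>i<n. x_of_z (z (p i)) ^ (a ! inv p (p i)))"
      using prod.permute[OF p, of "\<lambda>i. x_of_z (z i) ^ (a ! inv p i)"] by (simp add: o_def)
    also have "\<dots> = (\<Prod>i<n. x_of_z ((z \<circ> p) i) ^ (a ! i))"
      using permutes_inverses[OF p] by simp
    finally show "mono_hurwitz g (permL (inv p) a) * (\<Prod>i<n. x_of_z (z i) ^ (permL (inv p) a ! i))
        = mono_hurwitz g a * (\<Prod>i<n. x_of_z ((z \<circ> p) i) ^ (a ! i))" using H by simp
  next
    fix b assume b: "b \<in> comps n"
    show "permL (inv p) (permL p b) = b"
      by (rule permL_permL[OF b]) (use permutes_in_image[OF pi] permutes_inverses[OF p] in auto)
    show "permL p b \<in> comps n" by (rule permL_comps[OF p b])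
  qed simp
  then have "((\<lambda>mu. mono_hurwitz g mu * (\<Prod>i<n. x_of_z ((z \<circ> p) i) ^ (mu ! i))) has_sum R z) (comps n)"
    using h1 by simp
  then show ?thesis using h2 has_sum_unique by blast
qed




theorem corollary2p9:
  fixes g n :: nat and C :: "nat list \<Rightarrow> real"
  assumes n_pos: "1 \<le> n"
    and not01: "(g, n) \<noteq> (0, 1)" and not02: "(g, n) \<noteq> (0, 2)"
    and C_fin: "finite {a. length a = n \<and> C a \<noteq> 0}"
    and poly: "\<forall>mu\<in>comps n. mono_hurwitz g mu =
        (\<Prod>i<n. real ((2 * (mu ! i)) choose (mu ! i))) *
        (\<Sum>a\<in>{a. length a = n \<and> C a \<noteq> 0}. C a * (\<Prod>i<n. real (mu ! i) ^ (a ! i)))"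
  shows "(\<forall>z :: nat \<Rightarrow> real. (\<forall>i<n. 2 / (1 + sqrt 2) < z i \<and> z i < 2) \<longrightarrow>
            ((\<lambda>mu. mono_hurwitz g mu * (\<Prod>i<n. x_of_z (z i) ^ (mu ! i))) has_sum
              (\<Sum>a\<in>{a. length a = n \<and> C a \<noteq> 0}. C a * (\<Prod>i<n. f_aux (a ! i) (z i)))) (comps n))
       \<and> (\<exists>(N::nat) (Q :: nat list \<Rightarrow> real). finite {e. length e = n \<and> Q e \<noteq> 0} \<and>
            (\<forall>z :: nat \<Rightarrow> real. (\<forall>i<n. 2 / (1 + sqrt 2) < z i \<and> z i < 2) \<longrightarrow>
               (\<Sum>a\<in>{a. length a = n \<and> C a \<noteq> 0}. C a * (\<Prod>i<n. f_aux (a ! i) (z i)))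
                 = mpoly_eval Q n z / (\<Prod>i<n. (z i - 2) ^ N)) \<and>
            (\<forall>(p :: nat \<Rightarrow> nat) (z :: nat \<Rightarrow> real). p permutes {..<n} \<and> (\<forall>i<n. z i \<noteq> 2) \<longrightarrow>
               mpoly_eval Q n (z \<circ> p) / (\<Prod>i<n. ((z \<circ> p) i - 2) ^ N)
                 = mpoly_eval Q n z / (\<Prod>i<n. (z i - 2) ^ N)))"
proof -
  define S where "S = {a. length a = n \<and> C a \<noteq> 0}"
  define R where "R z = (\<Sum>a\<in>S. C a * (\<Prod>i<n. f_aux (a ! i) (z i)))" for z :: "nat \<Rightarrow> real"
  define reg where "reg z \<longleftrightarrow> (\<forall>i<n. 2 / (1 + sqrt 2) < z i \<and> z i < 2)" for z :: "nat \<Rightarrow> real"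
  have regII: "\<forall>i<n. z i \<in> II" if "reg z" for z using that region_II unfolding reg_def by blast
  have P1: "((\<lambda>mu. mono_hurwitz g mu * (\<Prod>i<n. x_of_z (z i) ^ (mu ! i))) has_sum R z) (comps n)"
    if "reg z" for z
    unfolding R_def S_def by (rule part1[OF C_fin poly regII[OF that]])
  have reg_perm: "reg (z \<circ> p)" if "reg z" "p permutes {..<n}" for z p
    using that permutes_in_image[OF that(2)] unfolding reg_def by auto
  have symm: "R (z \<circ> p) = R z" if "reg z" "p permutes {..<n}" for z p
    by (rule symR[OF that(2) P1[OF that(1)] P1[OF reg_perm[OF that]]])
  have fS: "finite S" using C_fin unfolding S_def .
  from f_aux_poly have "\<forall>a. \<exists>p. \<forall>z. z \<noteq> 2 \<longrightarrow> f_aux a z = poly p z / (z - 2)^(2*a+1)" by blast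
  then obtain PP where PP: "\<And>a z. z \<noteq> 2 \<Longrightarrow> f_aux a z = poly (PP a) z / (z - 2)^(2*a+1)"
    by metis
  define N where "N = 2 * (\<Sum>a\<in>S. sum_list a) + 1"
  have Nge: "2 * (a ! i) + 1 \<le> N" if "a \<in> S" "i < n" for a i
  proof -
    have "a ! i \<le> sum_list a" using that elem_le_sum_list[of i a] unfolding S_def by simp
    also have "\<dots> \<le> (\<Sum>a\<in>S. sum_list a)" by (rule member_le_sum[OF that(1)]) (use fS in auto)
    finally show ?thesis unfolding N_def by simp
  qed
  define qq where "qq k = PP k * [:-2, 1:] ^ (N - (2*k+1))" for k
  have fq: "f_aux k w = poly (qq k) w / (w - 2)^N" if "w \<noteq> 2" "2*k+1 \<le> N" for k w
  proof -
    have c: "(w - 2)^(N - (2*k+1)) \<noteq> 0" using that by simp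
    have e0: "(w - 2)^((2*k+1) + (N - (2*k+1))) = (w - 2)^N"
      by (simp only: le_add_diff_inverse[OF that(2)])
    have "(w - 2)^N = (w - 2)^(2*k+1) * (w - 2)^(N - (2*k+1))"
      unfolding e0[symmetric] by (rule power_add)
    moreover have "poly (qq k) w = poly (PP k) w * (w - 2)^(N - (2*k+1))"
      unfolding qq_def by simp
    ultimately have "poly (qq k) w / (w - 2)^N = poly (PP k) w / (w - 2)^(2*k+1)"
      using c by simp
    then show ?thesis using PP[OF that(1)] by simp
  qed
  define D where "D z = (\<Prod>i<n. (z i - 2)^N)" for z :: "nat \<Rightarrow> real"
  define Num where "Num z = (\<Sum>a\<in>S. C a * (\<Prod>i<n. poly (qq (a ! i)) (z i)))" for z :: "nat \<Rightarrow> real"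
  have RN: "R z = Num z / D z" if "\<forall>i<n. z i \<noteq> 2" for z
  proof -
    have "R z = (\<Sum>a\<in>S. C a * (\<Prod>i<n. poly (qq (a ! i)) (z i) / (z i - 2)^N))"
      unfolding R_def using that fq Nge by (intro sum.cong refl arg_cong2[where f="(*)"] prod.cong) auto
    also have "\<dots> = (\<Sum>a\<in>S. C a * (\<Prod>i<n. poly (qq (a ! i)) (z i)) / D z)"
      unfolding D_def by (simp add: prod_dividef)
    also have "\<dots> = Num z / D z" unfolding Num_def by (simp add: sum_divide_distrib)
    finally show ?thesis .
  qed
  have Dperm: "D (z \<circ> p) = D z" if "p permutes {..<n}" for z p
    unfolding D_def using prod.permute[OF that, of "\<lambda>i. (z i - 2)^N"] by (simp add: o_def)
  define Perms where "Perms = {p. p permutes {..<n::nat}}"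
  have fP: "finite Perms" unfolding Perms_def by (rule finite_permutations) simp
  have cP: "card Perms = fact n" unfolding Perms_def by (rule card_permutations) simp_all
  define Ns where "Ns z = (1 / fact n) * (\<Sum>p\<in>Perms. Num (z \<circ> p))" for z :: "nat \<Rightarrow> real"
  have Numperm: "Num (z \<circ> p) = (\<Sum>a\<in>S. C a * (\<Prod>i<n. poly (qq (a ! inv p i)) (z i)))"
    if "p \<in> Perms" for z p
  proof -
    have p: "p permutes {..<n}" using that unfolding Perms_def by simp
    have "(\<Prod>i<n. poly (qq (a ! i)) ((z \<circ> p) i)) = (\<Prod>i<n. poly (qq (a ! inv p i)) (z i))" for a
      using prod.permute[OF p, of "\<lambda>i. poly (qq (a ! inv p i)) (z i)"] permutes_inverses[OF p]
      by (simp add: o_def)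
    then show ?thesis unfolding Num_def by simp
  qed
  have "is_mp n (\<lambda>z. (1 / fact n) * (\<Sum>p\<in>Perms. \<Sum>a\<in>S. C a * (\<Prod>i<n. poly (qq (a ! inv p i)) (z i))))"
    by (intro is_mp_cmult is_mp_sum fP fS is_mp_prod)
  moreover have "(\<lambda>z. (1 / fact n) * (\<Sum>p\<in>Perms. \<Sum>a\<in>S. C a * (\<Prod>i<n. poly (qq (a ! inv p i)) (z i)))) = Ns"
    unfolding Ns_def using Numperm by (intro ext) simp
  ultimately have "is_mp n Ns" by simp
  then obtain Q where Qf: "finite {e. length e = n \<and> Q e \<noteq> 0}" and Qe: "\<And>z. Ns z = mpoly_eval Q n z"
    unfolding is_mp_def by blast
  have NsNum: "Ns z = Num z" if "reg z" for z
  proof -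
    have ne: "\<forall>i<n. z i \<noteq> 2" using that unfolding reg_def by force
    have Dnz: "D z \<noteq> 0" unfolding D_def using ne by simp
    have "Num (z \<circ> p) = Num z" if "p \<in> Perms" for p
    proof -
      have p: "p permutes {..<n}" using that unfolding Perms_def by simp
      have ne': "\<forall>i<n. (z \<circ> p) i \<noteq> 2" using reg_perm[OF \<open>reg z\<close> p] unfolding reg_def by force
      have a1: "R (z \<circ> p) = Num (z \<circ> p) / D (z \<circ> p)" by (rule RN[OF ne'])
      have a2: "R (z \<circ> p) = Num (z \<circ> p) / D z" using a1 unfolding Dperm[OF p] .
      have "Num (z \<circ> p) / D z = Num z / D z"
        unfolding a2[symmetric] RN[OF ne, symmetric] by (rule symm[OF \<open>reg z\<close> p])
      then show ?thesis using Dnz by simp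
    qed
    then have "(\<Sum>p\<in>Perms. Num (z \<circ> p)) = (\<Sum>p\<in>Perms. Num z)" by (rule sum.cong[OF refl])
    also have "\<dots> = fact n * Num z" using cP by simp
    finally show ?thesis unfolding Ns_def by simp
  qed
  have Nsperm: "Ns (z \<circ> p) = Ns z" if p: "p permutes {..<n}" for z p
  proof -
    have pi: "inv p permutes {..<n}" by (rule permutes_inv[OF p])
    have "(\<Sum>q\<in>Perms. Num ((z \<circ> p) \<circ> q)) = (\<Sum>r\<in>Perms. Num (z \<circ> r))"
    proof (rule sum.reindex_bij_witness[where j="\<lambda>q. p \<circ> q" and i="\<lambda>r. inv p \<circ> r"])
      fix q assume "q \<in> Perms"
      then have q: "q permutes {..<n}" unfolding Perms_def by simp
      show "inv p \<circ> (p \<circ> q) = q" using permutes_inverses(2)[OF p] by (simp add: fun_eq_iff)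
      show "p \<circ> q \<in> Perms" unfolding Perms_def using permutes_compose[OF q p] by simp
      show "Num (z \<circ> (p \<circ> q)) = Num ((z \<circ> p) \<circ> q)" by (simp add: o_assoc)
    next
      fix r assume "r \<in> Perms"
      then have r: "r permutes {..<n}" unfolding Perms_def by simp
      show "p \<circ> (inv p \<circ> r) = r" using permutes_inverses(1)[OF p] by (simp add: fun_eq_iff)
      show "inv p \<circ> r \<in> Perms" unfolding Perms_def using permutes_compose[OF r pi] by simp
    qed
    then show ?thesis unfolding Ns_def by simp
  qed
  show ?thesis
  proof (intro conjI allI impI)
    fix z :: "nat \<Rightarrow> real" assume "\<forall>i<n. 2 / (1 + sqrt 2) < z i \<and> z i < 2"
    then have "reg z" unfolding reg_def .
    then show "((\<lambda>mu. mono_hurwitz g mu * (\<Prod>i<n. x_of_z (z i) ^ (mu ! i))) has_sum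
              (\<Sum>a\<in>{a. length a = n \<and> C a \<noteq> 0}. C a * (\<Prod>i<n. f_aux (a ! i) (z i)))) (comps n)"
      using P1 unfolding R_def S_def by blast
  next
    show "\<exists>(N::nat) (Q :: nat list \<Rightarrow> real). finite {e. length e = n \<and> Q e \<noteq> 0} \<and>
            (\<forall>z :: nat \<Rightarrow> real. (\<forall>i<n. 2 / (1 + sqrt 2) < z i \<and> z i < 2) \<longrightarrow>
               (\<Sum>a\<in>{a. length a = n \<and> C a \<noteq> 0}. C a * (\<Prod>i<n. f_aux (a ! i) (z i)))
                 = mpoly_eval Q n z / (\<Prod>i<n. (z i - 2) ^ N)) \<and>
            (\<forall>(p :: nat \<Rightarrow> nat) (z :: nat \<Rightarrow> real). p permutes {..<n} \<and> (\<forall>i<n. z i \<noteq> 2) \<longrightarrow>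
               mpoly_eval Q n (z \<circ> p) / (\<Prod>i<n. ((z \<circ> p) i - 2) ^ N)
                 = mpoly_eval Q n z / (\<Prod>i<n. (z i - 2) ^ N))"
    proof (intro exI conjI allI impI)
      show "finite {e. length e = n \<and> Q e \<noteq> 0}" by (rule Qf)
    next
      fix z :: "nat \<Rightarrow> real" assume "\<forall>i<n. 2 / (1 + sqrt 2) < z i \<and> z i < 2"
      then have rz: "reg z" unfolding reg_def .
      have ne: "\<forall>i<n. z i \<noteq> 2" using rz unfolding reg_def by force
      have "R z = mpoly_eval Q n z / D z" using RN[OF ne] NsNum[OF rz] Qe[of z] by simp
      then show "(\<Sum>a\<in>{a. length a = n \<and> C a \<noteq> 0}. C a * (\<Prod>i<n. f_aux (a ! i) (z i)))
                 = mpoly_eval Q n z / (\<Prod>i<n. (z i - 2) ^ N)" unfolding R_def S_def D_def .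
    next
      fix p :: "nat \<Rightarrow> nat" and z :: "nat \<Rightarrow> real"
      assume "p permutes {..<n} \<and> (\<forall>i<n. z i \<noteq> 2)"
      then have p: "p permutes {..<n}" by simp
      have "mpoly_eval Q n (z \<circ> p) / D (z \<circ> p) = mpoly_eval Q n z / D z"
        using Qe[of "z \<circ> p"] Qe[of z] Nsperm[OF p, of z] Dperm[OF p, of z] by simp
      then show "mpoly_eval Q n (z \<circ> p) / (\<Prod>i<n. ((z \<circ> p) i - 2) ^ N)
                 = mpoly_eval Q n z / (\<Prod>i<n. (z i - 2) ^ N)" unfolding D_def .
    qed
  qed
qed


end
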